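(* Let $\nu>0$, $K>0$ and $d\in\mathbb{N}$, $d\ge2$. Define $\tau_0=\nu$ and $\tau_s=2\tau_{s-1}+3$ for $s\ge1$. There exists $p\in\mathbb{N}$ with the following property. Let $\theta_1,\ldots,\theta_p$ be irrational numbers for which there exists $C>0$ such that for every choice of pairwise distinct indices $i_1,\ldots,i_d\in\{1,\ldots,p\}$ and every $k\in\mathbb{Z}\setminus\{0\}$, $\max_{1\le m\le d}\|k\theta_{i_m}\|\ge C|k|^{-\nu}$. Then for every sufficiently large $U>0$ and every $V$ with $U\le V\le U^K$, there exist $k\in\{1,\ldots,p\}$ and integers $l<n$ such that $l,l+1,\ldots,n-1\in\mathcal{A}_{\tau_{d-1}}(\theta_k)$ and $$q_{k,l}\le U\le V\le q_{k,n}.$$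
   Context: $\|x\|$ is the distance from $x$ to the nearest integer. For an irrational $\alpha$, $(q_n)_{n\ge1}$ denotes the increasing sequence of denominators of the best rational approximations (convergents) of $\alpha$: $q_1=1$ and $\|k\alpha\|>\|q_n\alpha\|$ for all $0<k<q_{n+1}$, $k\ne q_n$. For $\theta_j$ this sequence is written $(q_{j,n})_n$. For $\tau>0$, $\mathcal{A}_\tau(\theta_j)=\{s\in\mathbb{N}: q_{j,s+1}\le q_{j,s}^\tau\}$; a run $l,\ldots,n-1$ of consecutive elements of $\mathcal{A}_\tau(\theta_j)$ is called a Diophantine string of exponent $\tau$. *)

theory Defs
  imports Complex_Main
begin

definition dnint :: "real \<Rightarrow> real" where
  "dnint x = min (x - of_int \<lfloor>x\<rfloor>) (of_int \<lceil>x\<rceil> - x)"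

text \<open>Denominators of best approximations, indexed from 1: q 1 = 1 and
  q (n+1) is the least k > q n with dnint (k*a) < dnint (q n * a); this is exactly
  the sequence determined by the paper's condition (for irrational a).
  The value at index 0 is a dummy and is never used.\<close>
fun convq :: "real \<Rightarrow> nat \<Rightarrow> nat" where
  "convq a 0 = 1"
| "convq a (Suc 0) = 1"
| "convq a (Suc (Suc n)) =
     (LEAST k. k > convq a (Suc n) \<and> dnint (real k * a) < dnint (real (convq a (Suc n)) * a))"

definition Aset :: "real \<Rightarrow> real \<Rightarrow> nat set" where
  "Aset tau a = {s. s \<ge> 1 \<and> real (convq a (s + 1)) \<le> real (convq a s) powr tau}"

fun tauseq :: "real \<Rightarrow> nat \<Rightarrow> real" where
  "tauseq nu 0 = nu"
| "tauseq nu (Suc s) = 2 * tauseq nu s + 3"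

end

theory Submission
  imports Defs "HOL-Analysis.Kronecker_Approximation_Theorem"
begin

lemma dnint_le: "dnint x \<le> \<bar>x - of_int z\<bar>"
proof -
  have "z \<le> \<lfloor>x\<rfloor> \<or> z \<ge> \<lceil>x\<rceil>"
    by (metis ceiling_le_iff floor_less_cancel le_floor_iff linorder_not_le not_less_iff_gr_or_eq of_int_less_iff)
  then show ?thesis unfolding dnint_def
    by (smt (verit, best) ceiling_less_cancel ceiling_of_int ceiling_less_iff floor_le_ceiling of_int_less_iff of_int_floor_le le_of_int_ceiling)
qed

lemma dnint_ex: "\<exists>z. dnint x = \<bar>x - of_int z\<bar>"
  unfolding dnint_def
  by (smt (verit) le_of_int_ceiling of_int_floor_le)

lemma dnint_nonneg: "dnint x \<ge> 0"
  using dnint_ex by (metis abs_ge_zero)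

lemma dnint_mult: "dnint (real m * x) \<le> real m * dnint x"
proof -
  obtain z where z: "dnint x = \<bar>x - of_int z\<bar>" using dnint_ex by blast
  have "dnint (real m * x) \<le> \<bar>real m * x - of_int (int m * z)\<bar>" by (rule dnint_le)
  also have "\<dots> = real m * \<bar>x - of_int z\<bar>" proof -
    have "real m * x - of_int (int m * z) = real m * (x - of_int z)" by (simp add: algebra_simps)
    then show ?thesis by (simp add: abs_mult)
  qed
  finally show ?thesis using z by simp
qed

lemma dnint_pos: assumes "a \<notin> \<rat>" "k \<ge> 1" shows "dnint (real k * a) > 0"
proof (rule ccontr)
  assume "\<not> ?thesis"
  then have "dnint (real k * a) = 0" using dnint_nonneg[of "real k * a"] by linarith
  then obtain z where "real k * a = of_int z" using dnint_ex by (metis abs_0_eq eq_iff_diff_eq_0)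
  then have "a = of_int z / real k" using assms(2) by (simp add: field_simps)
  then have "a \<in> \<rat>" by simp
  then show False using assms by simp
qed

lemma dirichlet: assumes "N > 0" shows "\<exists>k::nat. 1 \<le> k \<and> k \<le> N \<and> dnint (real k * a) < 1 / real N"
proof -
  obtain h k where hk: "0 < k" "k \<le> int N" "\<bar>of_int k * a - of_int h\<bar> < 1/N"
    using Dirichlet_approx[OF assms] by blast
  show ?thesis
    apply (rule exI[of _ "nat k"])
    using hk dnint_le[of "of_int k * a" h] by auto
qed


lemma convq_step:
  assumes a: "a \<notin> \<rat>" and s: "s \<ge> 1"
    and P: "\<forall>k. 0 < k \<and> k \<le> convq a s \<longrightarrow> dnint (real k * a) \<ge> dnint (real (convq a s) * a)"
    and q1: "convq a s \<ge> 1"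
  shows "convq a (Suc s) > convq a s \<and> dnint (real (convq a (Suc s)) * a) < dnint (real (convq a s) * a)
     \<and> (\<forall>k. convq a s < k \<and> k < convq a (Suc s) \<longrightarrow> dnint (real k * a) \<ge> dnint (real (convq a s) * a))"
proof -
  obtain t where t: "s = Suc t" using s by (cases s) auto
  define q where "q = convq a s"
  define R where "R = (\<lambda>k. k > q \<and> dnint (real k * a) < dnint (real q * a))"
  have eq: "convq a (Suc s) = (LEAST k. R k)" unfolding R_def q_def t by simp
  have e: "dnint (real q * a) > 0" using dnint_pos[OF a] q1 q_def by simp
  obtain N :: nat where N: "N > 0" "1 / real N < dnint (real q * a)"
  proof -
    obtain N where "real N > 1 / dnint (real q * a)" using reals_Archimedean2 by blast
    moreover have "real N > 0" using calculation e
      by (smt (verit) divide_pos_pos)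
    moreover have "1 / real N < dnint (real q * a)" using calculation e
      by (smt (verit) divide_less_eq mult.commute)
    ultimately show ?thesis using that by simp
  qed
  obtain k where k: "1 \<le> k" "dnint (real k * a) < 1 / real N" using dirichlet[OF N(1)] by blast
  have kl: "dnint (real k * a) < dnint (real q * a)" using k N by linarith
  have "k > q"
  proof (rule ccontr)
    assume "\<not> k > q"
    then have "k \<le> q" by simp
    then have "dnint (real k * a) \<ge> dnint (real q * a)" using P k(1) unfolding q_def by simp
    then show False using kl by linarith
  qed
  then have "R k" unfolding R_def using kl by blast
  then have Rl: "R (LEAST k. R k)" by (rule LeastI)
  have nl: "\<And>j. j < (LEAST k. R k) \<Longrightarrow> \<not> R j" by (rule not_less_Least)
  have R1: "R (convq a (Suc s))" unfolding eq by (rule Rl)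
  have R2: "\<And>j. j < convq a (Suc s) \<Longrightarrow> \<not> R j" unfolding eq by (rule nl)
  show ?thesis
  proof (intro conjI allI impI)
    show "convq a (Suc s) > convq a s" using R1 unfolding R_def q_def by blast
    show "dnint (real (convq a (Suc s)) * a) < dnint (real (convq a s) * a)" using R1 unfolding R_def q_def by blast
    fix j assume j: "convq a s < j \<and> j < convq a (Suc s)"
    then have "\<not> R j" using R2 by blast
    then show "dnint (real j * a) \<ge> dnint (real (convq a s) * a)" using j unfolding R_def q_def by linarith
  qed
qed

lemma convq_props:
  assumes a: "a \<notin> \<rat>" and s: "s \<ge> 1"
  shows "convq a s \<ge> 1 \<and> (\<forall>k. 0 < k \<and> k \<le> convq a s \<longrightarrow> dnint (real k * a) \<ge> dnint (real (convq a s) * a))"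
  using s
proof (induction s rule: dec_induct)
  case base
  show ?case
  proof (intro conjI allI impI)
    show "1 \<le> convq a 1" by simp
    fix k assume "0 < k \<and> k \<le> convq a 1"
    then have "k = 1" by simp
    then show "dnint (real (convq a 1) * a) \<le> dnint (real k * a)" by simp
  qed
next
  case (step s)
  have s1: "s \<ge> 1" using step by simp
  note st = convq_step[OF a s1 conjunct2[OF step.IH] conjunct1[OF step.IH]]
  show ?case
  proof (intro conjI allI impI)
    show "1 \<le> convq a (Suc s)" using st step.IH by linarith
    fix k assume k: "0 < k \<and> k \<le> convq a (Suc s)"
    show "dnint (real (convq a (Suc s)) * a) \<le> dnint (real k * a)"
    proof (cases "k = convq a (Suc s)")
      case True then show ?thesis by simp
    next
      case False
      then have "k < convq a (Suc s)" using k by simp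
      then have "dnint (real k * a) \<ge> dnint (real (convq a s) * a)"
        using st step.IH k by (cases "k \<le> convq a s") auto
      then show ?thesis using st by linarith
    qed
  qed
qed

lemma convq_mono: assumes a: "a \<notin> \<rat>" and s: "s \<ge> 1" shows "convq a (Suc s) > convq a s"
  using convq_step[OF a s] convq_props[OF a s] by blast

lemma convq_best: assumes a: "a \<notin> \<rat>" and s: "s \<ge> 1" and k: "0 < k" "k < convq a (Suc s)"
  shows "dnint (real k * a) \<ge> dnint (real (convq a s) * a)"
  using convq_step[OF a s] convq_props[OF a s] k by (cases "k \<le> convq a s") auto

lemma convq_ge: assumes a: "a \<notin> \<rat>" and s: "s \<ge> 1" shows "convq a s \<ge> s"
  using s
proof (induction s rule: dec_induct)
  case base then show ?case by simp
next
  case (step s) then show ?case using convq_mono[OF a, of s] by simp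
qed

lemma convq_approx: assumes a: "a \<notin> \<rat>" and s: "s \<ge> 1"
  shows "dnint (real (convq a s) * a) < 2 / real (convq a (Suc s))"
proof -
  define N where "N = convq a (Suc s) - 1"
  have q1: "convq a s \<ge> 1" using convq_props[OF a s] by blast
  have N0: "N > 0" using convq_mono[OF a s] q1 unfolding N_def by linarith
  obtain k where k: "1 \<le> k" "k \<le> N" "dnint (real k * a) < 1 / real N" using dirichlet[OF N0] by blast
  have "dnint (real (convq a s) * a) \<le> dnint (real k * a)"
    using convq_best[OF a s, of k] k N_def N0 by simp
  then have "dnint (real (convq a s) * a) < 1 / real N" using k by linarith
  moreover have "1 / real N \<le> 2 / real (convq a (Suc s))"
    using N0 unfolding N_def by (simp add: field_simps)
  ultimately show ?thesis by linarith
qed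


lemma fail_gives:
  assumes a: "a \<notin> \<rat>" and U: "U \<ge> 1" "U \<le> V"
    and nc: "\<not> (\<exists>l n::nat. l < n \<and> (\<forall>s\<in>{l..<n}. s \<in> Aset \<tau> a) \<and>
            real (convq a l) \<le> U \<and> V \<le> real (convq a n))"
  shows "\<exists>Q::nat. 1 \<le> Q \<and> real Q \<le> V \<and> dnint (real Q * a) < 2 / U
           \<and> dnint (real Q * a) < 2 * real Q powr (-\<tau>)"
proof -
  define L where "L = {s. s \<ge> 1 \<and> real (convq a s) \<le> U}"
  have "L \<subseteq> {..nat \<lceil>U\<rceil>}"
  proof
    fix s assume "s \<in> L"
    then have "s \<ge> 1" "real (convq a s) \<le> U" unfolding L_def by auto
    moreover have "convq a s \<ge> s" using convq_ge[OF a] calculation by simp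
    ultimately have "real s \<le> U" by linarith
    then show "s \<in> {..nat \<lceil>U\<rceil>}" by (simp add: le_nat_iff le_ceiling_iff)
  qed
  then have finL: "finite L" using finite_subset by blast
  have "1 \<in> L" unfolding L_def using U by simp
  define l where "l = Max L"
  have lL: "l \<in> L" unfolding l_def using finL \<open>1 \<in> L\<close> Max_in by blast
  have lmax: "\<And>s. s \<in> L \<Longrightarrow> s \<le> l" unfolding l_def using finL by simp
  have l1: "l \<ge> 1" and ql: "real (convq a l) \<le> U" using lL unfolding L_def by auto
  define P where "P = (\<lambda>n. n > l \<and> V \<le> real (convq a n))"
  define m where "m = max (l+1) (nat \<lceil>V\<rceil>)"
  have "P m"
  proof -
    have "m \<ge> 1" unfolding m_def by simp
    then have "convq a m \<ge> m" using convq_ge[OF a] by simp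
    moreover have "real m \<ge> V" unfolding m_def by linarith
    ultimately show ?thesis unfolding P_def m_def by auto
  qed
  define n where "n = (LEAST n. P n)"
  have Pn: "P n" unfolding n_def using \<open>P m\<close> by (rule LeastI)
  have nn: "\<And>j. j < n \<Longrightarrow> \<not> P j" unfolding n_def by (rule not_less_Least)
  have "\<not> (\<forall>s\<in>{l..<n}. s \<in> Aset \<tau> a)" using nc Pn ql unfolding P_def by blast
  then obtain s where s: "l \<le> s" "s < n" "s \<notin> Aset \<tau> a" by auto
  have s1: "s \<ge> 1" using s l1 by simp
  have big: "real (convq a (s+1)) > real (convq a s) powr \<tau>" using s(3) s1 unfolding Aset_def by auto
  have "s + 1 \<notin> L" using lmax s(1) by fastforce
  then have bigU: "real (convq a (s+1)) > U" unfolding L_def by auto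
  have qV: "real (convq a s) \<le> V"
  proof (cases "s = l")
    case True then show ?thesis using ql U by simp
  next
    case False
    then have "\<not> P s" using nn s by simp
    then show ?thesis using False s(1) unfolding P_def by simp
  qed
  have q1: "convq a s \<ge> 1" using convq_props[OF a s1] by blast
  have ap: "dnint (real (convq a s) * a) < 2 / real (convq a (s+1))" using convq_approx[OF a s1] by simp
  have "2 / real (convq a (s+1)) < 2 / U" using bigU U by (simp add: frac_less2)
  moreover have "2 / real (convq a (s+1)) < 2 / (real (convq a s) powr \<tau>)"
    using big q1 by (simp add: frac_less2)
  moreover have "2 / (real (convq a s) powr \<tau>) = 2 * real (convq a s) powr (-\<tau>)"
    using q1 by (simp add: powr_minus divide_inverse)
  ultimately show ?thesis using ap qV q1 by (intro exI[of _ "convq a s"]) auto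
qed


lemma core:
  fixes Q :: "'a \<Rightarrow> nat" and A :: "'a set" and M y :: nat
  assumes nu: "\<nu> > 0" and C: "C > 0" and U: "U > 1" and L: "L = ln U" and w: "w > 0"
    and M: "2 * real M \<ge> \<nu> + 2" and dM: "real d * real M * w * (1 + \<nu>) \<le> 1/2"
    and wL: "w * L \<ge> \<bar>ln (C/2)\<bar>" and L2: "L \<ge> 2 * \<bar>ln (C/2)\<bar>"
    and tau: "\<tau> \<ge> \<nu> + (real d - 1) * (\<nu> + 3)" and d: "d \<ge> 2"
    and A: "finite A" "card A = d" "m0 \<in> A" and Q1: "\<forall>m\<in>A. Q m \<ge> 1"
    and e: "e < 2 / U" "e < 2 * real (Q m0) powr (-\<tau>)"
    and cls: "(\<forall>m\<in>A. ln (real (Q m)) < real M * w * L) \<or>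
              (y \<ge> M \<and> (\<forall>m\<in>A. real y * w * L \<le> ln (real (Q m)) \<and> ln (real (Q m)) < (real y + 1) * w * L))"
  shows "(\<Prod>m\<in>A-{m0}. real (Q m)) * e < C * (\<Prod>m\<in>A. real (Q m)) powr (-\<nu>)"
proof -
  define R where "R = (\<Prod>m\<in>A-{m0}. real (Q m))"
  define Kp where "Kp = (\<Prod>m\<in>A. real (Q m))"
  define lr where "lr = (\<Sum>m\<in>A-{m0}. ln (real (Q m)))"
  define lk where "lk = (\<Sum>m\<in>A. ln (real (Q m)))"
  define l0 where "l0 = ln (real (Q m0))"
  have Qp: "\<And>m. m \<in> A \<Longrightarrow> real (Q m) > 0" using Q1 by force
  have lnQ0: "\<And>m. m \<in> A \<Longrightarrow> ln (real (Q m)) \<ge> 0" using Q1 by force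
  have Rp: "R > 0" unfolding R_def using Qp by (intro prod_pos) auto
  have Kpp: "Kp > 0" unfolding Kp_def using Qp by (intro prod_pos) auto
  have lnR: "ln R = lr" unfolding R_def lr_def using Qp A(1) by (subst ln_prod) auto
  have lnK: "ln Kp = lk" unfolding Kp_def lk_def using Qp A(1) by (subst ln_prod) auto
  have lk_eq: "lk = l0 + lr" unfolding lk_def lr_def l0_def using A by (simp add: sum.remove)
  have l0: "l0 \<ge> 0" unfolding l0_def using lnQ0 A by simp
  have lr0: "lr \<ge> 0" unfolding lr_def using lnQ0 by (intro sum_nonneg) auto
  have cardr: "card (A - {m0}) = d - 1" using A by simp
  have L0: "L > 0" using U L by simp
  have lnC: "ln C - ln 2 = ln (C/2)" using C by (simp add: ln_div)
  have rhs: "ln (C * Kp powr (-\<nu>)) = ln C - \<nu> * lk"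
    using C Kpp lnK by (simp add: ln_mult ln_powr)
  have suff: "R * X \<le> C * Kp powr (-\<nu>)" if X: "X > 0" "ln X \<le> ln C - \<nu> * lk - lr" for X
  proof -
    have "ln (R * X) = lr + ln X" using Rp X lnR by (simp add: ln_mult)
    then have "ln (R * X) \<le> ln (C * Kp powr (-\<nu>))" using rhs X by linarith
    then show ?thesis using Rp X C Kpp by (subst (asm) ln_le_cancel_iff) auto
  qed
  show ?thesis
  proof (cases "\<forall>m\<in>A. ln (real (Q m)) < real M * w * L")
    case True
    have "lk \<le> real (card A) * (real M * w * L)" unfolding lk_def
      using True by (intro sum_bounded_above) (auto intro: less_imp_le)
    then have "lk \<le> real d * (real M * w * L)" using A by simp
    then have "(1 + \<nu>) * lk \<le> (1 + \<nu>) * (real d * (real M * w * L))" using nu by (intro mult_left_mono) auto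
    also have "\<dots> = (real d * real M * w * (1 + \<nu>)) * L" by (simp add: algebra_simps)
    also have "\<dots> \<le> (1/2) * L" using dM L0 by (intro mult_right_mono) auto
    finally have hk: "(1 + \<nu>) * lk \<le> L / 2" by simp
    have X: "2 / U > 0" "ln (2 / U) = ln 2 - L" using U L by (auto simp: ln_div)
    have "ln (2 / U) \<le> ln C - \<nu> * lk - lr"
      using X hk lk_eq l0 lnC L2 lr0 distrib_right[of 1 \<nu> lk] abs_ge_minus_self[of "ln (C/2)"] by linarith
    then have "R * (2 / U) \<le> C * Kp powr (-\<nu>)" using suff X by blast
    moreover have "R * e < R * (2 / U)" using e Rp by (intro mult_strict_left_mono) auto
    ultimately show ?thesis unfolding R_def Kp_def by linarith
  next
    case False
    then have y: "y \<ge> M" and cl: "\<forall>m\<in>A. real y * w * L \<le> ln (real (Q m)) \<and> ln (real (Q m)) < (real y + 1) * w * L"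
      using cls by auto
    have d1: "real (d - 1) = real d - 1" using d by simp
    have "lr \<le> real (card (A - {m0})) * ((real y + 1) * w * L)" unfolding lr_def
      using cl by (intro sum_bounded_above) (auto intro: less_imp_le)
    then have h1: "lr \<le> (real d - 1) * ((real y + 1) * w * L)" using cardr d1 by simp
    have h2: "(1 + \<nu>) * lr \<le> (1 + \<nu>) * ((real d - 1) * ((real y + 1) * w * L))"
      using h1 nu by (intro mult_left_mono) auto
    have h3: "(\<tau> - \<nu>) * l0 \<ge> ((real d - 1) * (\<nu> + 3)) * l0"
      using tau l0 by (intro mult_right_mono) auto
    have yl0: "real y * w * L \<le> l0" using cl A unfolding l0_def by blast
    have h4: "((real d - 1) * (\<nu> + 3)) * l0 \<ge> ((real d - 1) * (\<nu> + 3)) * (real y * w * L)"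
      using yl0 d nu by (intro mult_left_mono) auto
    have h5: "(1 + \<nu>) * ((real d - 1) * ((real y + 1) * w * L)) - ((real d - 1) * (\<nu> + 3)) * (real y * w * L)
       = (real d - 1) * (w * L) * (1 + \<nu> - 2 * real y)" by (simp add: algebra_simps)
    have wL0: "w * L > 0" using w L0 by simp
    have "(real d - 1) * (w * L) * (1 + \<nu> - 2 * real y) \<le> (real d - 1) * (w * L) * (-1)"
      using y M d wL0 by (intro mult_left_mono) auto
    also have "\<dots> \<le> - (w * L)"
    proof -
      have "1 * (w * L) \<le> (real d - 1) * (w * L)" using d wL0 by (intro mult_right_mono) auto
      then show ?thesis by simp
    qed
    finally have h6: "(real d - 1) * (w * L) * (1 + \<nu> - 2 * real y) \<le> - (w * L)" .
    define X where "X = 2 * real (Q m0) powr (-\<tau>)"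
    have Q0p: "real (Q m0) > 0" using Qp A by simp
    have X: "X > 0" "ln X = ln 2 - \<tau> * l0" unfolding X_def l0_def using Q0p by (auto simp: ln_mult ln_powr)
    have "ln X \<le> ln C - \<nu> * lk - lr"
    proof -
      have "\<nu> * lk = \<nu> * l0 + \<nu> * lr" using lk_eq by (simp add: algebra_simps)
      moreover have "(1 + \<nu>) * lr = lr + \<nu> * lr" by (simp add: algebra_simps)
      moreover have "(\<tau> - \<nu>) * l0 = \<tau> * l0 - \<nu> * l0" by (simp add: algebra_simps)
      ultimately show ?thesis
        using X h2 h3 h4 h5 h6 lnC wL abs_ge_minus_self[of "ln (C/2)"] by linarith
    qed
    then have "R * X \<le> C * Kp powr (-\<nu>)" using suff X by blast
    moreover have "R * e < R * X" using e Rp X_def by (intro mult_strict_left_mono) auto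
    ultimately show ?thesis unfolding R_def Kp_def by linarith
  qed
qed


lemma tau_ge: "\<nu> \<ge> 0 \<Longrightarrow> tauseq \<nu> s \<ge> \<nu> + real s * (\<nu> + 3)"
proof (induction s)
  case 0 then show ?case by simp
next
  case (Suc s)
  have h: "0 \<le> real s * (\<nu> + 3)" using Suc.prems by simp
  have e1: "tauseq \<nu> (Suc s) = 2 * tauseq \<nu> s + 3" by simp
  have e2: "\<nu> + real (Suc s) * (\<nu> + 3) = \<nu> + real s * (\<nu> + 3) + \<nu> + 3" by (simp add: algebra_simps)
  show ?case using Suc.IH[OF Suc.prems] h e1 e2 Suc.prems by linarith
qed

lemma floor_facts:
  assumes x: "x \<ge> (0::real)"
  shows "real (nat \<lfloor>x\<rfloor>) \<le> x \<and> x < real (nat \<lfloor>x\<rfloor>) + 1"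
  using x by linarith

lemma class_facts:
  assumes wL: "wL > 0" and lq: "lq \<ge> (0::real)"
  shows "real (nat \<lfloor>lq / wL\<rfloor>) * wL \<le> lq \<and> lq < (real (nat \<lfloor>lq / wL\<rfloor>) + 1) * wL"
proof -
  have x: "lq / wL \<ge> 0" using wL lq by simp
  note f = floor_facts[OF x]
  have "real (nat \<lfloor>lq / wL\<rfloor>) * wL \<le> (lq / wL) * wL" using f wL by (intro mult_right_mono) auto
  moreover have "(lq / wL) * wL < (real (nat \<lfloor>lq / wL\<rfloor>) + 1) * wL" using f wL by (intro mult_strict_right_mono) auto
  ultimately show ?thesis using wL by simp
qed

lemma pigeon:
  fixes f :: "nat \<Rightarrow> nat"
  assumes "f ` {1..p} \<subseteq> {0..J}" "p = (d - 1) * (J + 1) + 1"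
  shows "\<exists>y. card {i\<in>{1..p}. f i = y} \<ge> d"
proof (rule ccontr)
  assume nt: "\<not> ?thesis"
  then have lt: "\<And>y. card {i\<in>{1..p}. f i = y} \<le> d - 1"
  proof -
    fix y
    have "\<not> card {i\<in>{1..p}. f i = y} \<ge> d" using nt by blast
    then show "card {i\<in>{1..p}. f i = y} \<le> d - 1" by arith
  qed
  have "{1..p} = (\<Union>y\<in>{0..J}. {i\<in>{1..p}. f i = y})" using assms(1) by auto
  then have "card {1..p} \<le> (\<Sum>y\<in>{0..J}. card {i\<in>{1..p}. f i = y})"
    by (metis card_UN_le finite_atLeastAtMost)
  also have "\<dots> \<le> (\<Sum>y\<in>{0..J}. d - 1)" using lt by (intro sum_mono) auto
  also have "\<dots> = (J + 1) * (d - 1)" by simp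
  finally show False using assms(2) by (simp add: mult.commute)
qed


theorem mainTheorem4:
  fixes \<nu> K :: real and d :: nat
  assumes "\<nu> > 0" and "K > 0" and "d \<ge> 2"
  shows "\<exists>p::nat. \<forall>\<theta> :: nat \<Rightarrow> real.
     ((\<forall>i\<in>{1..p}. \<theta> i \<notin> \<rat>) \<and>
      (\<exists>C>0. \<forall>\<iota> :: nat \<Rightarrow> nat.
          (\<iota> ` {1..d} \<subseteq> {1..p} \<and> inj_on \<iota> {1..d}) \<longrightarrow>
          (\<forall>k::int. k \<noteq> 0 \<longrightarrow>
             (MAX m\<in>{1..d}. dnint (of_int k * \<theta> (\<iota> m))) \<ge> C * \<bar>real_of_int k\<bar> powr (-\<nu>))))
     \<longrightarrow>
     (\<exists>U0. \<forall>U V::real. U \<ge> U0 \<and> U > 0 \<and> U \<le> V \<and> V \<le> U powr K \<longrightarrow>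
        (\<exists>k\<in>{1..p}. \<exists>l n::nat. l < n \<and>
            (\<forall>s\<in>{l..<n}. s \<in> Aset (tauseq \<nu> (d - 1)) (\<theta> k)) \<and>
            real (convq (\<theta> k) l) \<le> U \<and> V \<le> real (convq (\<theta> k) n)))"
proof -
  note nu = assms(1) and Kpos = assms(2) and d = assms(3)
  define \<tau> where "\<tau> = tauseq \<nu> (d - 1)"
  have "\<tau> \<ge> \<nu> + real (d - 1) * (\<nu> + 3)" unfolding \<tau>_def using tau_ge nu by simp
  then have tau: "\<tau> \<ge> \<nu> + (real d - 1) * (\<nu> + 3)" using d by simp
  define M :: nat where "M = nat \<lceil>\<nu>\<rceil> + 1"
  have M1: "real M \<ge> \<nu> + 1" unfolding M_def by linarith
  have M: "2 * real M \<ge> \<nu> + 2" using M1 nu by linarith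
  have Mpos: "M \<ge> 1" unfolding M_def by simp
  define w where "w = 1 / (2 * real d * real M * (1 + \<nu>))"
  have den: "2 * real d * real M * (1 + \<nu>) > 0" using d Mpos nu by simp
  have w: "w > 0" unfolding w_def using den by simp
  have dM: "real d * real M * w * (1 + \<nu>) \<le> 1/2" unfolding w_def using den by (simp add: field_simps)
  define J where "J = nat \<lfloor>K / w\<rfloor>"
  define p where "p = (d - 1) * (J + 1) + 1"
  show ?thesis
  proof (rule exI[of _ p], intro allI impI)
    fix \<theta> :: "nat \<Rightarrow> real"
    assume H: "(\<forall>i\<in>{1..p}. \<theta> i \<notin> \<rat>) \<and>
      (\<exists>C>0. \<forall>\<iota> :: nat \<Rightarrow> nat.
          (\<iota> ` {1..d} \<subseteq> {1..p} \<and> inj_on \<iota> {1..d}) \<longrightarrow>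
          (\<forall>k::int. k \<noteq> 0 \<longrightarrow>
             (MAX m\<in>{1..d}. dnint (of_int k * \<theta> (\<iota> m))) \<ge> C * \<bar>real_of_int k\<bar> powr (-\<nu>)))"
    then have irr: "\<And>i. i \<in> {1..p} \<Longrightarrow> \<theta> i \<notin> \<rat>" by blast
    from H obtain C where C: "C > 0" and HC: "\<forall>\<iota> :: nat \<Rightarrow> nat.
          (\<iota> ` {1..d} \<subseteq> {1..p} \<and> inj_on \<iota> {1..d}) \<longrightarrow>
          (\<forall>k::int. k \<noteq> 0 \<longrightarrow>
             (MAX m\<in>{1..d}. dnint (of_int k * \<theta> (\<iota> m))) \<ge> C * \<bar>real_of_int k\<bar> powr (-\<nu>))" by blast
    define c0 where "c0 = \<bar>ln (C/2)\<bar>"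
    have c00: "c0 \<ge> 0" unfolding c0_def by simp
    define U0 where "U0 = exp (c0 / w + 2 * c0) + 2"
    show "\<exists>U0. \<forall>U V::real. U \<ge> U0 \<and> U > 0 \<and> U \<le> V \<and> V \<le> U powr K \<longrightarrow>
        (\<exists>k\<in>{1..p}. \<exists>l n::nat. l < n \<and>
            (\<forall>s\<in>{l..<n}. s \<in> Aset (tauseq \<nu> (d - 1)) (\<theta> k)) \<and>
            real (convq (\<theta> k) l) \<le> U \<and> V \<le> real (convq (\<theta> k) n))"
    proof (rule exI[of _ U0], intro allI impI)
      fix U V :: real
      assume UV: "U \<ge> U0 \<and> U > 0 \<and> U \<le> V \<and> V \<le> U powr K"
      define L where "L = ln U"
      have U1: "U > 1" using UV unfolding U0_def by (smt (verit) exp_gt_zero)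
      have "exp (c0 / w + 2 * c0) \<le> U" using UV unfolding U0_def by simp
      then have "c0 / w + 2 * c0 \<le> L" unfolding L_def using U1
        by (metis exp_le_cancel_iff exp_ln less_trans zero_less_one)
      moreover have "c0 / w \<ge> 0" using c00 w by simp
      ultimately have L2: "L \<ge> 2 * c0" and Lw: "c0 / w \<le> L" using c00 by linarith+
      have "w * (c0 / w) \<le> w * L" using Lw w by (intro mult_left_mono) auto
      then have wL: "w * L \<ge> c0" using w by simp
      have L0: "L > 0" unfolding L_def using U1 by simp
      show "\<exists>k\<in>{1..p}. \<exists>l n::nat. l < n \<and>
            (\<forall>s\<in>{l..<n}. s \<in> Aset (tauseq \<nu> (d - 1)) (\<theta> k)) \<and>
            real (convq (\<theta> k) l) \<le> U \<and> V \<le> real (convq (\<theta> k) n)"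
      proof (rule ccontr)
        assume nc: "\<not> ?thesis"
        have "\<forall>i\<in>{1..p}. \<exists>Q::nat. 1 \<le> Q \<and> real Q \<le> V \<and> dnint (real Q * \<theta> i) < 2 / U
           \<and> dnint (real Q * \<theta> i) < 2 * real Q powr (-\<tau>)"
        proof
          fix i assume i: "i \<in> {1..p}"
          show "\<exists>Q::nat. 1 \<le> Q \<and> real Q \<le> V \<and> dnint (real Q * \<theta> i) < 2 / U
             \<and> dnint (real Q * \<theta> i) < 2 * real Q powr (-\<tau>)"
            apply (rule fail_gives[OF irr[OF i]])
            using U1 UV nc i unfolding \<tau>_def by auto
        qed
        then obtain Q :: "nat \<Rightarrow> nat" where Q: "\<And>i. i \<in> {1..p} \<Longrightarrow> 1 \<le> Q i \<and> real (Q i) \<le> V \<and>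
           dnint (real (Q i) * \<theta> i) < 2 / U \<and> dnint (real (Q i) * \<theta> i) < 2 * real (Q i) powr (-\<tau>)"
          by metis
        have wL0: "w * L > 0" using w L0 by simp
        define j where "j i = nat \<lfloor>ln (real (Q i)) / (w * L)\<rfloor>" for i
        define cl where "cl i = (if j i < M then 0 else j i)" for i
        have lnQ0: "\<And>i. i \<in> {1..p} \<Longrightarrow> ln (real (Q i)) \<ge> 0" using Q by simp
        have cf: "\<And>i. i \<in> {1..p} \<Longrightarrow> real (j i) * (w * L) \<le> ln (real (Q i)) \<and> ln (real (Q i)) < (real (j i) + 1) * (w * L)"
          unfolding j_def using class_facts[OF wL0] lnQ0 by blast
        have "cl ` {1..p} \<subseteq> {0..J}"
        proof
          fix z assume "z \<in> cl ` {1..p}"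
          then obtain i where i: "i \<in> {1..p}" "z = cl i" by blast
          have "ln (real (Q i)) \<le> ln V" using Q[OF i(1)] by (subst ln_le_cancel_iff) auto
          also have "\<dots> \<le> ln (U powr K)" using UV U1 Q[OF i(1)] by (subst ln_le_cancel_iff) auto
          also have "\<dots> = K * L" unfolding L_def using U1 by (simp add: ln_powr)
          finally have "ln (real (Q i)) \<le> K * L" .
          then have "ln (real (Q i)) / (w * L) \<le> K / w" using wL0 L0 w by (simp add: divide_simps)
          then have "j i \<le> J" unfolding j_def J_def by (intro nat_mono floor_mono)
          then show "z \<in> {0..J}" using i unfolding cl_def by auto
        qed
        from pigeon[OF this p_def] obtain y where y: "card {i\<in>{1..p}. cl i = y} \<ge> d" by blast
        then obtain S where S: "S \<subseteq> {i\<in>{1..p}. cl i = y}" "card S = d" "finite S"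
          by (meson obtain_subset_with_card_n)
        obtain \<iota> where bij: "bij_betw \<iota> {1..d} S" using ex_bij_betw_nat_finite_1[OF S(3)] S(2) by auto
        have img: "\<iota> ` {1..d} = S" and inj: "inj_on \<iota> {1..d}" using bij by (auto simp: bij_betw_def)
        have ip: "\<And>m. m \<in> {1..d} \<Longrightarrow> \<iota> m \<in> {1..p}" and icl: "\<And>m. m \<in> {1..d} \<Longrightarrow> cl (\<iota> m) = y"
          using img S(1) by blast+
        define kk where "kk = (\<Prod>m\<in>{1..d}. Q (\<iota> m))"
        have kk1: "kk \<ge> 1" unfolding kk_def using Q ip by (intro prod_ge_1) auto
        have "(MAX m\<in>{1..d}. dnint (of_int (int kk) * \<theta> (\<iota> m))) \<ge> C * \<bar>real_of_int (int kk)\<bar> powr (-\<nu>)"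
        proof -
          have "\<iota> ` {1..d} \<subseteq> {1..p}" using ip by blast
          then have "\<forall>k::int. k \<noteq> 0 \<longrightarrow>
             (MAX m\<in>{1..d}. dnint (of_int k * \<theta> (\<iota> m))) \<ge> C * \<bar>real_of_int k\<bar> powr (-\<nu>)"
            using HC inj by blast
          moreover have "int kk \<noteq> 0" using kk1 by simp
          ultimately show ?thesis by blast
        qed
        then have HM: "(MAX m\<in>{1..d}. dnint (real kk * \<theta> (\<iota> m))) \<ge> C * real kk powr (-\<nu>)" by simp
        have "(MAX m\<in>{1..d}. dnint (real kk * \<theta> (\<iota> m))) \<in> (\<lambda>m. dnint (real kk * \<theta> (\<iota> m))) ` {1..d}"
          using d by (intro Max_in) auto
        then obtain m0 where m0: "m0 \<in> {1..d}" and lb: "dnint (real kk * \<theta> (\<iota> m0)) \<ge> C * real kk powr (-\<nu>)"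
          using HM by auto
        define r where "r = (\<Prod>m\<in>{1..d}-{m0}. Q (\<iota> m))"
        have kkr: "kk = Q (\<iota> m0) * r" unfolding kk_def r_def using m0 by (simp add: prod.remove)
        have "real kk * \<theta> (\<iota> m0) = real r * (real (Q (\<iota> m0)) * \<theta> (\<iota> m0))" using kkr by simp
        then have ub: "dnint (real kk * \<theta> (\<iota> m0)) \<le> real r * dnint (real (Q (\<iota> m0)) * \<theta> (\<iota> m0))"
          using dnint_mult by metis
        have cls: "(\<forall>m\<in>{1..d}. ln (real (Q (\<iota> m))) < real M * w * L) \<or>
              (y \<ge> M \<and> (\<forall>m\<in>{1..d}. real y * w * L \<le> ln (real (Q (\<iota> m))) \<and> ln (real (Q (\<iota> m))) < (real y + 1) * w * L))"
        proof (cases "y = 0")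
          case True
          have "\<forall>m\<in>{1..d}. ln (real (Q (\<iota> m))) < real M * w * L"
          proof
            fix m assume m: "m \<in> {1..d}"
            have "j (\<iota> m) < M" using icl[OF m] True Mpos unfolding cl_def by (auto split: if_splits)
            then have "real (j (\<iota> m)) + 1 \<le> real M" by simp
            then have "(real (j (\<iota> m)) + 1) * (w * L) \<le> real M * (w * L)" using wL0 by (intro mult_right_mono) auto
            then show "ln (real (Q (\<iota> m))) < real M * w * L" using cf[OF ip[OF m]] by (simp add: mult.assoc)
          qed
          then show ?thesis by blast
        next
          case False
          have "\<forall>m\<in>{1..d}. real y * w * L \<le> ln (real (Q (\<iota> m))) \<and> ln (real (Q (\<iota> m))) < (real y + 1) * w * L"
          proof
            fix m assume m: "m \<in> {1..d}"
            have "j (\<iota> m) = y" using icl[OF m] False unfolding cl_def by (auto split: if_splits)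
            then show "real y * w * L \<le> ln (real (Q (\<iota> m))) \<and> ln (real (Q (\<iota> m))) < (real y + 1) * w * L"
              using cf[OF ip[OF m]] by (simp add: mult.assoc)
          qed
          moreover have "y \<ge> M" using icl[of 1] d False unfolding cl_def by (auto split: if_splits)
          ultimately show ?thesis by blast
        qed
        have Qm0: "dnint (real (Q (\<iota> m0)) * \<theta> (\<iota> m0)) < 2 / U"
            "dnint (real (Q (\<iota> m0)) * \<theta> (\<iota> m0)) < 2 * real ((Q \<circ> \<iota>) m0) powr (-\<tau>)"
          using Q[OF ip[OF m0]] by auto
        have "(\<Prod>m\<in>{1..d}-{m0}. real ((Q \<circ> \<iota>) m)) * dnint (real (Q (\<iota> m0)) * \<theta> (\<iota> m0))
              < C * (\<Prod>m\<in>{1..d}. real ((Q \<circ> \<iota>) m)) powr (-\<nu>)"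
          apply (rule core[where Q="Q \<circ> \<iota>" and A="{1..d}" and y=y and \<tau>=\<tau> and d=d and M=M and w=w
                and L=L and U=U and C=C and \<nu>=\<nu>])
          using nu C U1 L_def w M dM tau d m0 Qm0 wL L2 c0_def Q ip cls by auto
        then have "real r * dnint (real (Q (\<iota> m0)) * \<theta> (\<iota> m0)) < C * real kk powr (-\<nu>)"
          unfolding r_def kk_def by simp
        then show False using lb ub by linarith
      qed
    qed
  qed
qed

end
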